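(* Consider agent $i$ with $N_i$ neighbors $j\in\mathcal N_i$, and functions $f_i:W\times W^{N_i}\to\mathbb{R}^2$ ($W\subseteq\mathbb{R}^2$) satisfying $\|f_i(x,\bar x)\|\le M$, $\|f_i(x,\bar x)-f_i(y,\bar x)\|\le L_i\|x-y\|$ and $\|f_i(x,\bar x)-f_i(x,\bar y)\|\le \bar L_i\|\bar x-\bar y\|$ for all $x,y\in W$, $\bar x,\bar y\in W^{N_i}$, with $L_i,\bar L_i>0$. Fix $x_{\mathrm{des}}\in\mathbb{R}^2$ and set $g_i(e,\bar x,u)=f_i(e+x_{\mathrm{des}},\bar x)+u$. Let $t_{k_z}\in\mathbb{R}$, $T_z>0$, and let $u_i:[t_{k_z},t_{k_z}+T_z]\to\mathbb{R}^2$ be piecewise continuous with $\|u_i(s)\|\le u_{\max}$. Let $\bar x_i(\cdot)$ be the actual trajectory of the neighbors' stacked positions and $\hat{\bar x}_i(\cdot)$ a predicted one, both in $W^{N_i}$, such that each neighbor's actual and predicted positions satisfy $\|x_j(s)-\hat x_j(s)\|\le 2\sqrt3R$ for all $s$ and $j\in\mathcal N_i$, where $R>0$ is the side length of the hexagonal cells. Let $e_i(\cdot)$ solve $\dot e_i=g_i(e_i,\bar x_i(s),u_i(s))$ and $\hat e_i(\cdot)$ solve $\dot{\hat e}_i=g_i(\hat e_i,\hat{\bar x}_i(s),u_i(s))$ on $[t_{k_z},t_{k_z}+T_z]$, with the same initial value $\hat e_i(t_{k_z})=e_i(t_{k_z})$ (and $e_i+x_{\mathrm{des}},\hat e_i+x_{\mathrm{des}}\in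 W$). Then for every $s\in[t_{k_z},t_{k_z}+T_z]$, $$\|e_i(s)-\hat e_i(s)\|\le \rho_i(s-t_{k_z}),$$ where $$\rho_i(y)=\min\Big\{\widetilde\rho_i\big[e^{L_iy}-1\big],\ 2\|e_i(t_{k_z})\|+2y(M+u_{\max})\Big\},\qquad \widetilde\rho_i=\frac{2\sqrt3 R\,\bar L_i N_i}{L_i}.$$
   Context: $\|\cdot\|$ denotes the Euclidean norm; $\bar x\in W^{N_i}\subseteq\mathbb{R}^{2N_i}$ is the stacked vector of the $N_i$ neighbors' positions and its norm is the Euclidean norm on $\mathbb{R}^{2N_i}$. *)

theory Defs
  imports "HOL-Analysis.Analysis"
begin

text \<open>Neighbor positions are stacked as (real^2)^'n with CARD('n) = N_i; the library norm on
  this type is the Euclidean norm of the stacked vector in R^(2 N_i).\<close>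
definition g_dyn :: "(real^2 \<Rightarrow> (real^2)^'n \<Rightarrow> real^2) \<Rightarrow> real^2
    \<Rightarrow> real^2 \<Rightarrow> (real^2)^'n \<Rightarrow> real^2 \<Rightarrow> real^2" where
  "g_dyn f xdes e xb u = f (e + xdes) xb + u"

definition piecewise_continuous_on :: "real \<Rightarrow> real \<Rightarrow> (real \<Rightarrow> 'a::topological_space) \<Rightarrow> bool" where
  "piecewise_continuous_on a b u \<longleftrightarrow>
     (\<exists>S. finite S \<and> (\<forall>x\<in>{a..b} - S. continuous (at x within {a..b}) u))"

definition in_stack :: "(real^2) set \<Rightarrow> (real^2)^'n \<Rightarrow> bool" where
  "in_stack W xb \<longleftrightarrow> (\<forall>j. xb $ j \<in> W)"

text \<open>Solution of e' = g(e, xbar(s), u(s)) on [t0, t0+T]: continuous, and differentiable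
  with the prescribed derivative except at finitely many points (discontinuities of u).\<close>
definition solves_on :: "real \<Rightarrow> real \<Rightarrow> (real \<Rightarrow> real^2) \<Rightarrow> (real \<Rightarrow> real^2 \<Rightarrow> real^2) \<Rightarrow> bool" where
  "solves_on a b e F \<longleftrightarrow> continuous_on {a..b} e \<and>
     (\<exists>D. finite D \<and> (\<forall>s\<in>{a..b} - D. (e has_vector_derivative F s (e s)) (at s within {a..b})))"

end

theory Submission
  imports Defs
begin


lemma ftc_sol:
  assumes "solves_on a b e F" "a \<le> s" "s \<le> b"
  shows "((\<lambda>x. F x (e x)) has_integral (e s - e a)) {a..s}"
proof -
  from assms(1) obtain D where c: "continuous_on {a..b} e" and D: "finite D"
    and d: "\<And>x. x\<in>{a..b} - D \<Longrightarrow> (e has_vector_derivative F x (e x)) (at x within {a..b})"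
    unfolding solves_on_def by blast
  show ?thesis
  proof (rule fundamental_theorem_of_calculus_interior_strong[OF D assms(2)])
    fix x assume x: "x \<in> {a<..<s} - D"
    hence "x \<in> {a..b} - D" "a < x" "x < b" using assms by auto
    with d[of x] show "(e has_vector_derivative F x (e x)) (at x)"
      by (simp add: at_within_Icc_at)
  next
    show "continuous_on {a..s} e" using c assms by (auto intro: continuous_on_subset)
  qed
qed

lemma cont_sol: "solves_on a b e F \<Longrightarrow> continuous_on {a..b} e"
  unfolding solves_on_def by blast

lemma stack_norm_bound:
  fixes x :: "(real^2)^'n"
  assumes "\<And>j. norm (x $ j) \<le> c"
  shows "norm x \<le> real CARD('n) * c"
proof -
  have "norm x \<le> (\<Sum>j\<in>UNIV. norm (x $ j))"
    unfolding norm_vec_def by (rule L2_set_le_sum) simp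
  also have "\<dots> \<le> (\<Sum>j\<in>(UNIV::'n set). c)" by (rule sum_mono) (use assms in auto)
  finally show ?thesis by simp
qed

theorem lemma2:
  fixes W :: "(real^2) set"
    and f :: "real^2 \<Rightarrow> (real^2)^'n \<Rightarrow> real^2"
    and M L Lb R umax t0 T :: real
    and xdes :: "real^2"
    and u :: "real \<Rightarrow> real^2"
    and xb xh :: "real \<Rightarrow> (real^2)^'n"
    and e eh :: "real \<Rightarrow> real^2"
  assumes f_bound: "\<And>x xbar. x \<in> W \<Longrightarrow> in_stack W xbar \<Longrightarrow> norm (f x xbar) \<le> M"
    and f_lip1: "\<And>x y xbar. x \<in> W \<Longrightarrow> y \<in> W \<Longrightarrow> in_stack W xbar \<Longrightarrow>
                   norm (f x xbar - f y xbar) \<le> L * norm (x - y)"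
    and f_lip2: "\<And>x xbar ybar. x \<in> W \<Longrightarrow> in_stack W xbar \<Longrightarrow> in_stack W ybar \<Longrightarrow>
                   norm (f x xbar - f x ybar) \<le> Lb * norm (xbar - ybar)"
    and L_pos: "L > 0" and Lb_pos: "Lb > 0"
    and T_pos: "T > 0" and R_pos: "R > 0"
    and u_pc: "piecewise_continuous_on t0 (t0 + T) u"
    and u_bound: "\<And>s. s \<in> {t0..t0 + T} \<Longrightarrow> norm (u s) \<le> umax"
    and xb_W: "\<And>s. s \<in> {t0..t0 + T} \<Longrightarrow> in_stack W (xb s)"
    and xh_W: "\<And>s. s \<in> {t0..t0 + T} \<Longrightarrow> in_stack W (xh s)"
    and pred_err: "\<And>s j. s \<in> {t0..t0 + T} \<Longrightarrow> norm (xb s $ j - xh s $ j) \<le> 2 * sqrt 3 * R"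
    and e_sol: "solves_on t0 (t0 + T) e (\<lambda>s z. g_dyn f xdes z (xb s) (u s))"
    and eh_sol: "solves_on t0 (t0 + T) eh (\<lambda>s z. g_dyn f xdes z (xh s) (u s))"
    and init: "eh t0 = e t0"
    and e_W: "\<And>s. s \<in> {t0..t0 + T} \<Longrightarrow> e s + xdes \<in> W"
    and eh_W: "\<And>s. s \<in> {t0..t0 + T} \<Longrightarrow> eh s + xdes \<in> W"
  shows "\<forall>s \<in> {t0..t0 + T}.
           norm (e s - eh s) \<le>
             min ((2 * sqrt 3 * R * Lb * real CARD('n) / L) * (exp (L * (s - t0)) - 1))
                 (2 * norm (e t0) + 2 * (s - t0) * (M + umax))"
proof -
  define K where "K = 2 * sqrt 3 * R * Lb * real CARD('n)"
  define d where "d = (\<lambda>x. e x - eh x)"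
  define G1 where "G1 = (\<lambda>x. g_dyn f xdes (e x) (xb x) (u x))"
  define G2 where "G2 = (\<lambda>x. g_dyn f xdes (eh x) (xh x) (u x))"
  have K0: "K \<ge> 0" unfolding K_def using R_pos Lb_pos by simp
  have ce: "continuous_on {t0..t0+T} e" using cont_sol[OF e_sol] .
  have ceh: "continuous_on {t0..t0+T} eh" using cont_sol[OF eh_sol] .
  have cd: "continuous_on {t0..t0+T} d" unfolding d_def using ce ceh by (intro continuous_intros)
  have dint: "((\<lambda>x. G1 x - G2 x) has_integral d s) {t0..s}" if "s \<in> {t0..t0+T}" for s
  proof -
    have "(G1 has_integral (e s - e t0)) {t0..s}" unfolding G1_def
      using ftc_sol[OF e_sol, of s] that by auto
    moreover have "(G2 has_integral (eh s - eh t0)) {t0..s}" unfolding G2_def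
      using ftc_sol[OF eh_sol, of s] that by auto
    ultimately have "((\<lambda>x. G1 x - G2 x) has_integral (e s - e t0) - (eh s - eh t0)) {t0..s}"
      by (rule has_integral_diff)
    thus ?thesis using init unfolding d_def by simp
  qed
  have xbound: "norm (xb x - xh x) \<le> 2 * sqrt 3 * R * real CARD('n)" if "x \<in> {t0..t0+T}" for x
  proof -
    have "norm (xb x - xh x) \<le> real CARD('n) * (2 * sqrt 3 * R)"
      by (rule stack_norm_bound) (use pred_err that in simp)
    thus ?thesis by (simp add: algebra_simps)
  qed
  have Dbound: "norm (G1 x - G2 x) \<le> L * norm (d x) + K" if x: "x \<in> {t0..t0+T}" for x
  proof -
    have "G1 x - G2 x = (f (e x + xdes) (xb x) - f (eh x + xdes) (xb x))
        + (f (eh x + xdes) (xb x) - f (eh x + xdes) (xh x))"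
      unfolding G1_def G2_def g_dyn_def by simp
    also have "norm \<dots> \<le> norm (f (e x + xdes) (xb x) - f (eh x + xdes) (xb x))
        + norm (f (eh x + xdes) (xb x) - f (eh x + xdes) (xh x))" by (rule norm_triangle_ineq)
    also have "\<dots> \<le> L * norm ((e x + xdes) - (eh x + xdes)) + Lb * norm (xb x - xh x)"
      using f_lip1[OF e_W[OF x] eh_W[OF x] xb_W[OF x]] f_lip2[OF eh_W[OF x] xb_W[OF x] xh_W[OF x]]
      by linarith
    also have "\<dots> \<le> L * norm (d x) + K"
    proof -
      have "Lb * norm (xb x - xh x) \<le> Lb * (2 * sqrt 3 * R * real CARD('n))"
        using xbound[OF x] Lb_pos by (simp add: mult_left_mono)
      thus ?thesis unfolding K_def d_def by (simp add: algebra_simps)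
    qed
    finally show ?thesis .
  qed
  have dle: "norm (d s) \<le> integral {t0..s} (\<lambda>x. L * norm (d x) + K)" if s: "s \<in> {t0..t0+T}" for s
  proof -
    have "d s = integral {t0..s} (\<lambda>x. G1 x - G2 x)" using dint[OF s] by (simp add: integral_unique)
    also have "norm \<dots> \<le> integral {t0..s} (\<lambda>x. L * norm (d x) + K)"
    proof (rule integral_norm_bound_integral)
      show "(\<lambda>x. G1 x - G2 x) integrable_on {t0..s}" using dint[OF s] by blast
      have "continuous_on {t0..s} d" using cd s by (auto intro: continuous_on_subset)
      hence "continuous_on {t0..s} (\<lambda>x. L * norm (d x) + K)" by (intro continuous_intros)
      thus "(\<lambda>x. L * norm (d x) + K) integrable_on {t0..s}" by (rule integrable_continuous_interval)
      show "\<And>x. x \<in> {t0..s} \<Longrightarrow> norm (G1 x - G2 x) \<le> L * norm (d x) + K"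
        using Dbound s by auto
    qed
    finally show ?thesis .
  qed
  have gron: "norm (d s) \<le> K / L * (exp (L * (s - t0)) - 1) + eps * exp (L * (s - t0))"
    if s: "s \<in> {t0..t0+T}" and eps: "eps > 0" for s eps
  proof (rule ccontr)
    define psi where "psi = (\<lambda>x. K / L * (exp (L * (x - t0)) - 1) + eps * exp (L * (x - t0)))"
    have cpsi: "continuous_on UNIV psi" unfolding psi_def by (intro continuous_intros)
    define A where "A = {x \<in> {t0..t0+T}. psi x \<le> norm (d x)}"
    assume "\<not> ?thesis"
    hence sA: "s \<in> A" unfolding A_def psi_def using s by auto
    have "A = {t0..t0+T} \<inter> (\<lambda>x. norm (d x) - psi x) -` {0..}" unfolding A_def by auto
    moreover have "closed ({t0..t0+T} \<inter> (\<lambda>x. norm (d x) - psi x) -` {0..})"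
      by (rule continuous_closed_preimage)
        (auto intro!: continuous_intros cd continuous_on_subset[OF cpsi])
    ultimately have clA: "closed A" by simp
    define s1 where "s1 = Inf A"
    have bA: "bdd_below A" unfolding A_def by (rule bdd_belowI[of _ t0]) auto
    have s1A: "s1 \<in> A" unfolding s1_def using closed_contains_Inf[OF _ bA clA] sA by blast
    have s1s: "s1 \<in> {t0..t0+T}" using s1A unfolding A_def by auto
    have below: "x \<notin> A" if "x < s1" for x using cInf_lower[OF _ bA, of x] that s1_def by force
    have psi0: "psi t0 = eps" unfolding psi_def by simp
    have "t0 \<notin> A" unfolding A_def d_def using psi0 eps init by auto
    hence lt: "t0 < s1" using s1A s1s by (cases "s1 = t0") auto
    have le_all: "norm (d x) \<le> psi x" if x: "x \<in> {t0..s1}" for x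
    proof -
      have "{t0..<s1} \<subseteq> {x \<in> {t0..s1}. norm (d x) \<le> psi x}"
        using below s1s unfolding A_def by force
      moreover have "closed {x \<in> {t0..s1}. norm (d x) \<le> psi x}"
      proof -
        have "{x \<in> {t0..s1}. norm (d x) \<le> psi x} = {t0..s1} \<inter> (\<lambda>x. psi x - norm (d x)) -` {0..}" by auto
        moreover have "closed ({t0..s1} \<inter> (\<lambda>x. psi x - norm (d x)) -` {0..})"
          using s1s
          by (intro continuous_closed_preimage)
            (auto intro!: continuous_intros continuous_on_subset[OF cd] continuous_on_subset[OF cpsi])
        ultimately show ?thesis by simp
      qed
      ultimately have "closure {t0..<s1} \<subseteq> {x \<in> {t0..s1}. norm (d x) \<le> psi x}"
        by (rule closure_minimal)
      thus ?thesis using x lt by auto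
    qed
    have dpsi: "(psi has_vector_derivative (L * psi x + K)) (at x within {t0..s1})" for x
    proof -
      have "(psi has_real_derivative (K / L + eps) * (exp (L * (x - t0)) * L)) (at x)"
      proof -
        have "psi = (\<lambda>x. (K / L + eps) * exp (L * (x - t0)) - K / L)"
          unfolding psi_def by (rule ext) (simp add: algebra_simps)
        thus ?thesis by (auto intro!: derivative_eq_intros)
      qed
      moreover have "(K / L + eps) * (exp (L * (x - t0)) * L) = L * psi x + K"
        unfolding psi_def using L_pos by (simp add: field_simps)
      ultimately show ?thesis
        by (simp add: has_real_derivative_iff_has_vector_derivative has_vector_derivative_at_within)
    qed
    have ipsi: "((\<lambda>x. L * psi x + K) has_integral (psi s1 - psi t0)) {t0..s1}"
      using lt by (intro fundamental_theorem_of_calculus) (auto intro: dpsi)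
    have "norm (d s1) \<le> integral {t0..s1} (\<lambda>x. L * norm (d x) + K)" using dle[OF s1s] .
    also have "\<dots> \<le> integral {t0..s1} (\<lambda>x. L * psi x + K)"
    proof (rule integral_le)
      have "continuous_on {t0..s1} d" using cd s1s by (auto intro: continuous_on_subset)
      hence "continuous_on {t0..s1} (\<lambda>x. L * norm (d x) + K)" by (intro continuous_intros)
      thus "(\<lambda>x. L * norm (d x) + K) integrable_on {t0..s1}" by (rule integrable_continuous_interval)
      show "(\<lambda>x. L * psi x + K) integrable_on {t0..s1}" using ipsi by blast
      show "\<And>x. x \<in> {t0..s1} \<Longrightarrow> L * norm (d x) + K \<le> L * psi x + K"
        using le_all L_pos by (simp add: mult_left_mono)
    qed
    also have "\<dots> = psi s1 - eps" using ipsi psi0 by (simp add: integral_unique)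
    finally have "norm (d s1) < psi s1" using eps by simp
    thus False using s1A unfolding A_def by simp
  qed
  have part1: "norm (d s) \<le> K / L * (exp (L * (s - t0)) - 1)" if s: "s \<in> {t0..t0+T}" for s
  proof (rule field_le_epsilon)
    fix ee :: real assume ee: "ee > 0"
    have ex: "exp (L * (s - t0)) > 0" by simp
    have "norm (d s) \<le> K / L * (exp (L * (s - t0)) - 1) + (ee / exp (L * (s - t0))) * exp (L * (s - t0))"
      using gron[OF s, of "ee / exp (L * (s - t0))"] ee by simp
    thus "norm (d s) \<le> K / L * (exp (L * (s - t0)) - 1) + ee" using ex by simp
  qed
  have ebound: "norm (y s - y t0) \<le> (s - t0) * (M + umax)"
    if s: "s \<in> {t0..t0+T}" and ysol: "solves_on t0 (t0 + T) y (\<lambda>s z. g_dyn f xdes z (z' s) (u s))"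
      and yW: "\<And>s. s \<in> {t0..t0 + T} \<Longrightarrow> y s + xdes \<in> W"
      and zW: "\<And>s. s \<in> {t0..t0 + T} \<Longrightarrow> in_stack W (z' s)" for s y z'
  proof -
    have I: "((\<lambda>x. g_dyn f xdes (y x) (z' x) (u x)) has_integral (y s - y t0)) {t0..s}"
      using ftc_sol[OF ysol, of s] s by auto
    have "norm (y s - y t0) = norm (integral {t0..s} (\<lambda>x. g_dyn f xdes (y x) (z' x) (u x)))"
      using I by (simp add: integral_unique)
    also have "\<dots> \<le> integral {t0..s} (\<lambda>x. M + umax)"
    proof (rule integral_norm_bound_integral)
      show "(\<lambda>x. g_dyn f xdes (y x) (z' x) (u x)) integrable_on {t0..s}" using I by blast
      show "(\<lambda>x. M + umax) integrable_on {t0..s}" by (rule integrable_const_ivl)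
      fix x assume x: "x \<in> {t0..s}"
      hence x': "x \<in> {t0..t0+T}" using s by auto
      have "norm (g_dyn f xdes (y x) (z' x) (u x)) \<le> norm (f (y x + xdes) (z' x)) + norm (u x)"
        unfolding g_dyn_def by (rule norm_triangle_ineq)
      also have "\<dots> \<le> M + umax" using f_bound[OF yW[OF x'] zW[OF x']] u_bound[OF x'] by linarith
      finally show "norm (g_dyn f xdes (y x) (z' x) (u x)) \<le> M + umax" .
    qed
    also have "\<dots> = (s - t0) * (M + umax)" using s by simp
    finally show ?thesis .
  qed
  show ?thesis
  proof
    fix s assume s: "s \<in> {t0..t0+T}"
    have "norm (e s - eh s) \<le> K / L * (exp (L * (s - t0)) - 1)" using part1[OF s] unfolding d_def .
    moreover have "norm (e s - eh s) \<le> 2 * norm (e t0) + 2 * (s - t0) * (M + umax)"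
    proof -
      have a: "norm (e s - e t0) \<le> (s - t0) * (M + umax)" by (rule ebound[OF s e_sol e_W xb_W])
      have b: "norm (eh s - eh t0) \<le> (s - t0) * (M + umax)" by (rule ebound[OF s eh_sol eh_W xh_W])
      have "norm (e s - eh s) = norm ((e s - e t0) - (eh s - eh t0))" using init by simp
      also have "\<dots> \<le> norm (e s - e t0) + norm (eh s - eh t0)" by (rule norm_triangle_ineq4)
      finally have c: "norm (e s - eh s) \<le> norm (e s - e t0) + norm (eh s - eh t0)" .
      have "2 * (s - t0) * (M + umax) = (s - t0) * (M + umax) + (s - t0) * (M + umax)" by simp
      thus ?thesis using a b c norm_ge_zero[of "e t0"] by linarith
    qed
    ultimately show "norm (e s - eh s) \<le> min ((2 * sqrt 3 * R * Lb * real CARD('n) / L) * (exp (L * (s - t0)) - 1))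
                 (2 * norm (e t0) + 2 * (s - t0) * (M + umax))" unfolding K_def by simp
  qed
qed
end
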